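(* Let $\mathfrak F_3$ be the free group on $\{x,y,z\}$. Define the map $\Phi$ on vertices of the Farey tree $\mathrm{F}\mathbb T$ by $\Phi(r,t,s)=(\omega_r,\omega_t,\omega_s)\in\mathfrak F_3^3$ (each $\omega$ regarded as an element of $\mathfrak F_3$). Then $\Phi$ is an isomorphism of rooted planar binary trees from $\mathrm{F}\mathbb T$ onto the word tree $\mathrm{W}\mathbb T$; that is, $\Phi$ sends the root to the root and sends the left (resp. right) child of each vertex to the left (resp. right) child of its image. Equivalently, for every vertex $(r,t,s)$ of $\mathrm{F}\mathbb T$, the vertex of $\mathrm{W}\mathbb T$ at the same position (reached from the root by the same sequence of left/right moves) is $(\omega_r,\omega_t,\omega_s)$.
   Context: Farey tree $\mathrm{F}\mathbb T$: rooted planar binary tree with root $(\frac01,\frac11,\frac10)$, and each vertex $(\frac ab,\frac cd,\frac ef)$ has left child $(\frac ab,\frac{a+c}{b+d},\frac cd)$ and right child $(\frac cd,\frac{c+e}{d+f},\frac ef)$; here $\frac10$ represents $\infty$. Every positive rational occurs exactly once as a middle entry. Word tree $\mathrm{W}\mathbb T$: rooted planar binary tree with vertices in $\mathfrak F_3^3$, root $(x,y,z)$, and a vertex $(a,b,c)$ has left child $(a,bcb^{-1},b)$ and right child $(b,b^{-1}ab,c)$. Modified lattice: the planar graph with vertex set $\mathbb Z^2$ whose edges are the horizontal unit segments $[(i,j),(i+1,j)]$, the vertical unit segments $[(i,j),(i,j+1)]$, and the diagonal segments of slope $-1$ joining $(i,j+1)$ and $(i+1,j)$. Words $\omega_t$: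 set $\omega_{0/1}=x$, $\omega_{1/0}=z$. For a reduced fraction $t=p/q\in(0,\infty)$, let $L_t$ be the segment from $(0,0)$ to $(q,p)$, oriented from $(0,0)$ to $(q,p)$. List the edges of the modified lattice whose relative interior meets $L_t$, in the order of the intersection points along $L_t$. A horizontal (resp. diagonal, vertical) edge contributes the letter $x$ (resp. $y$, $z$) if the midpoint of the edge is not on the right-hand side of the oriented segment $L_t$ (including the case that the midpoint lies on $L_t$), and contributes $x^{-1}$ (resp. $y^{-1}$, $z^{-1}$) if the midpoint is on the right-hand side. The word $\omega_t$ is the concatenation of these letters in order. *)

theory Defs
  imports Complex_Main
begin

datatype gen = GX | GY | GZ

text \<open>A letter is a generator with a flag; the flag True means the inverse generator.\<close>
type_synonym letter = "gen \<times> bool"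
type_synonym word = "letter list"

definition inv_letter :: "letter \<Rightarrow> letter" where
  "inv_letter l = (fst l, \<not> snd l)"

text \<open>Free reduction: the unique freely reduced word equivalent to a word.
  Elements of F_3 are represented by freely reduced words.\<close>
fun reduce :: "word \<Rightarrow> word" where
  "reduce [] = []"
| "reduce (a # w) =
     (case reduce w of
        [] \<Rightarrow> [a]
      | b # w' \<Rightarrow> (if b = inv_letter a then w' else a # b # w'))"

definition fg_mult :: "word \<Rightarrow> word \<Rightarrow> word" where
  "fg_mult u v = reduce (u @ v)"

definition fg_inv :: "word \<Rightarrow> word" where
  "fg_inv u = rev (map inv_letter u)"

abbreviation gx :: word where "gx \<equiv> [(GX, False)]"
abbreviation gy :: word where "gy \<equiv> [(GY, False)]"
abbreviation gz :: word where "gz \<equiv> [(GZ, False)]"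

section \<open>Trees, vertices indexed by paths from the root (False = left, True = right)\<close>

text \<open>Farey tree: fractions a/b as pairs (a,b) of naturals; (1,0) stands for infinity.\<close>
type_synonym frac = "nat \<times> nat"

definition mediant :: "frac \<Rightarrow> frac \<Rightarrow> frac" where
  "mediant r s = (fst r + fst s, snd r + snd s)"

definition farey_child :: "frac \<times> frac \<times> frac \<Rightarrow> bool \<Rightarrow> frac \<times> frac \<times> frac" where
  "farey_child v d = (case v of (r, t, s) \<Rightarrow>
     (if d then (t, mediant t s, s) else (r, mediant r t, t)))"

definition farey_root :: "frac \<times> frac \<times> frac" where
  "farey_root = ((0, 1), (1, 1), (1, 0))"

definition farey_vertex :: "bool list \<Rightarrow> frac \<times> frac \<times> frac" where
  "farey_vertex path = foldl farey_child farey_root path"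

definition word_child :: "word \<times> word \<times> word \<Rightarrow> bool \<Rightarrow> word \<times> word \<times> word" where
  "word_child v d = (case v of (a, b, c) \<Rightarrow>
     (if d then (b, fg_mult (fg_inv b) (fg_mult a b), c)
           else (a, fg_mult b (fg_mult c (fg_inv b)), b)))"

definition word_root :: "word \<times> word \<times> word" where
  "word_root = (gx, gy, gz)"

definition word_vertex :: "bool list \<Rightarrow> word \<times> word \<times> word" where
  "word_vertex path = foldl word_child word_root path"

text \<open>Hor i j = [(i,j),(i+1,j)], Ver i j = [(i,j),(i,j+1)], Dia i j = [(i,j+1),(i+1,j)].\<close>
datatype edge = Hor int int | Ver int int | Dia int int

fun edge_start :: "edge \<Rightarrow> real \<times> real" where
  "edge_start (Hor i j) = (of_int i, of_int j)"
| "edge_start (Ver i j) = (of_int i, of_int j)"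
| "edge_start (Dia i j) = (of_int i, of_int j + 1)"

fun edge_end :: "edge \<Rightarrow> real \<times> real" where
  "edge_end (Hor i j) = (of_int i + 1, of_int j)"
| "edge_end (Ver i j) = (of_int i, of_int j + 1)"
| "edge_end (Dia i j) = (of_int i + 1, of_int j)"

fun edge_gen :: "edge \<Rightarrow> gen" where
  "edge_gen (Hor i j) = GX"
| "edge_gen (Dia i j) = GY"
| "edge_gen (Ver i j) = GZ"

definition edge_pt :: "edge \<Rightarrow> real \<Rightarrow> real \<times> real" where
  "edge_pt e u = ((1 - u) * fst (edge_start e) + u * fst (edge_end e),
                  (1 - u) * snd (edge_start e) + u * snd (edge_end e))"

text \<open>Point of L_t (from (0,0) to (q,p)) with parameter s in [0,1].\<close>
definition seg_pt :: "int \<Rightarrow> int \<Rightarrow> real \<Rightarrow> real \<times> real" where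
  "seg_pt p q s = (s * of_int q, s * of_int p)"

definition hits_at :: "int \<Rightarrow> int \<Rightarrow> edge \<Rightarrow> real \<Rightarrow> bool" where
  "hits_at p q e s \<longleftrightarrow> 0 \<le> s \<and> s \<le> 1 \<and> (\<exists>u. 0 < u \<and> u < 1 \<and> edge_pt e u = seg_pt p q s)"

definition crossing_edges :: "int \<Rightarrow> int \<Rightarrow> edge set" where
  "crossing_edges p q = {e. \<exists>s. hits_at p q e s}"

definition cross_param :: "int \<Rightarrow> int \<Rightarrow> edge \<Rightarrow> real" where
  "cross_param p q e = (THE s. hits_at p q e s)"

definition crossing_list :: "int \<Rightarrow> int \<Rightarrow> edge list" where
  "crossing_list p q = (THE es. set es = crossing_edges p q \<and>
       sorted_wrt (\<lambda>e e'. cross_param p q e < cross_param p q e') es)"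

definition edge_mid :: "edge \<Rightarrow> real \<times> real" where
  "edge_mid e = edge_pt e (1/2)"

definition right_side :: "int \<Rightarrow> int \<Rightarrow> real \<times> real \<Rightarrow> bool" where
  "right_side p q m \<longleftrightarrow> of_int q * snd m - of_int p * fst m < 0"

definition edge_letter :: "int \<Rightarrow> int \<Rightarrow> edge \<Rightarrow> letter" where
  "edge_letter p q e = (edge_gen e, right_side p q (edge_mid e))"

definition omega_rat :: "rat \<Rightarrow> word" where
  "omega_rat t = (case quotient_of t of (p, q) \<Rightarrow> map (edge_letter p q) (crossing_list p q))"

definition omega_frac :: "frac \<Rightarrow> word" where
  "omega_frac r = (if snd r = 0 then gz
                   else if fst r = 0 then gx
                   else omega_rat (Fract (int (fst r)) (int (snd r))))"

definition Phi :: "frac \<times> frac \<times> frac \<Rightarrow> word \<times> word \<times> word" where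
  "Phi v = (case v of (r, t, s) \<Rightarrow>
     (reduce (omega_frac r), reduce (omega_frac t), reduce (omega_frac s)))"

end

theory Submission
  imports Defs
begin

definition cr :: "letter \<Rightarrow> word \<Rightarrow> word" where
  "cr a w = (case w of [] \<Rightarrow> [a] | b # w' \<Rightarrow> (if b = inv_letter a then w' else a # b # w'))"

lemma reduce_Cons: "reduce (a # w) = cr a (reduce w)"
  by (simp add: cr_def)

declare reduce.simps(2)[simp del]

fun reduced :: "word \<Rightarrow> bool" where
  "reduced [] = True"
| "reduced [a] = True"
| "reduced (a # b # w) = (b \<noteq> inv_letter a \<and> reduced (b # w))"

lemma inv_inv[simp]: "inv_letter (inv_letter a) = a"
  by (simp add: inv_letter_def)

lemma inv_eq_iff: "(b = inv_letter a) = (a = inv_letter b)"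
  by (auto simp: inv_letter_def)

lemma reduced_tl: "reduced (a # w) \<Longrightarrow> reduced w"
  by (cases w) auto

lemma cr_reduced: "reduced w \<Longrightarrow> reduced (cr a w)"
  by (cases w) (auto simp: cr_def inv_eq_iff dest: reduced_tl)

lemma reduced_reduce: "reduced (reduce w)"
  by (induction w) (auto simp: reduce_Cons cr_reduced)

lemma cr_cancel: "reduced w \<Longrightarrow> cr a (cr (inv_letter a) w) = w"
proof (cases w)
  case Nil then show ?thesis by (simp add: cr_def)
next
  case (Cons b w')
  assume r: "reduced w"
  show ?thesis
  proof (cases "b = a")
    case True
    then show ?thesis using r Cons
      by (cases w') (auto simp: cr_def inv_eq_iff)
  next
    case False
    then show ?thesis using Cons by (auto simp: cr_def)
  qed
qed

lemma reduce_append: "reduce (u @ v) = foldr cr u (reduce v)"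
  by (induction u) (auto simp: reduce_Cons)

lemma reduce_append_right: "reduce (u @ reduce v) = reduce (u @ v)"
proof -
  have "reduce (reduce v) = reduce v"
  proof -
    have "\<And>w. reduced w \<Longrightarrow> reduce w = w"
    proof -
      fix w :: word show "reduced w \<Longrightarrow> reduce w = w"
        by (induction w rule: reduced.induct) (auto simp: reduce_Cons cr_def inv_eq_iff)
    qed
    then show ?thesis using reduced_reduce by blast
  qed
  then show ?thesis by (simp add: reduce_append)
qed

lemma reduce_reduced: "reduced w \<Longrightarrow> reduce w = w"
  by (induction w rule: reduced.induct) (auto simp: reduce_Cons cr_def inv_eq_iff)

lemma reduce_idem[simp]: "reduce (reduce w) = reduce w"
  by (simp add: reduce_reduced reduced_reduce)

lemma reduce_cr_append: "reduce (cr a w @ v) = cr a (reduce (w @ v))"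
proof (cases w)
  case Nil then show ?thesis by (simp add: cr_def reduce_Cons)
next
  case (Cons b w')
  show ?thesis
  proof (cases "b = inv_letter a")
    case True
    have "cr a (reduce (w @ v)) = cr a (cr b (reduce (w' @ v)))" using Cons by (simp add: reduce_Cons)
    also have "\<dots> = reduce (w' @ v)" using True cr_cancel[OF reduced_reduce, of a] by simp
    finally show ?thesis using Cons True by (simp add: cr_def)
  next
    case False
    then show ?thesis using Cons by (simp add: cr_def reduce_Cons)
  qed
qed

lemma reduce_append_left: "reduce (reduce u @ v) = reduce (u @ v)"
  by (induction u) (auto simp: reduce_Cons reduce_cr_append)

lemma reduce_cancel_pair: "reduce (u @ a # inv_letter a # v) = reduce (u @ v)"
proof -
  have "reduce (a # inv_letter a # v) = reduce v"
    by (simp add: reduce_Cons cr_cancel reduced_reduce)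
  then show ?thesis
    by (metis append_Cons append_Nil reduce_append_right)
qed

lemma reduce_cong_append:
  "reduce u = reduce u' \<Longrightarrow> reduce v = reduce v' \<Longrightarrow> reduce (u @ v) = reduce (u' @ v')"
  by (metis reduce_append_left reduce_append_right)

definition crr :: "word \<Rightarrow> letter \<Rightarrow> word" where
  "crr w a = (if w \<noteq> [] \<and> last w = inv_letter a then butlast w else w @ [a])"

lemma reduced_snoc_aux: "reduced u \<Longrightarrow> reduce (u @ [a]) = crr u a"
proof (induction u rule: reduced.induct)
  case 1 then show ?case by (simp add: crr_def reduce_Cons cr_def)
next
  case (2 b) then show ?case by (auto simp: crr_def reduce_Cons cr_def inv_eq_iff)
next
  case (3 b c w)
  then have IH: "reduce ((c # w) @ [a]) = crr (c # w) a" and nb: "c \<noteq> inv_letter b" by auto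
  have "reduce ((b # c # w) @ [a]) = cr b (crr (c # w) a)" using IH by (simp add: reduce_Cons)
  also have "\<dots> = crr (b # c # w) a"
  proof (cases "last (c # w) = inv_letter a")
    case True
    then show ?thesis using nb by (cases w) (auto simp: crr_def cr_def)
  next
    case False
    then show ?thesis using nb by (auto simp: crr_def cr_def)
  qed
  finally show ?case .
qed

lemma reduce_snoc: "reduce (w @ [a]) = crr (reduce w) a"
  by (metis reduce_append_left reduced_reduce reduced_snoc_aux)

lemma crr_rev: "crr (rev u) a = rev (cr a u)"
  by (cases u) (auto simp: crr_def cr_def inv_eq_iff butlast_rev)

lemma reduce_rev: "reduce (rev w) = rev (reduce w)"
  by (induction w) (auto simp: reduce_snoc reduce_Cons crr_rev)

definition sw :: "letter \<Rightarrow> letter" where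
  "sw l = ((case fst l of GX \<Rightarrow> GZ | GY \<Rightarrow> GY | GZ \<Rightarrow> GX), snd l)"

lemma sw_inj: "(sw a = sw b) = (a = b)"
  by (cases a; cases b) (auto simp: sw_def split: gen.splits)

lemma sw_inv: "sw (inv_letter a) = inv_letter (sw a)"
  by (simp add: sw_def inv_letter_def)

lemma sw_eq_inv: "(sw x = inv_letter (sw a)) = (x = inv_letter a)"
  by (metis sw_inv sw_inj)

lemma reduce_map_sw: "reduce (map sw w) = map sw (reduce w)"
proof (induction w)
  case Nil then show ?case by simp
next
  case (Cons a w)
  then show ?case
    by (cases "reduce w") (auto simp: reduce_Cons cr_def sw_eq_inv sw_inj)
qed

lemma inv_inj: "(inv_letter a = inv_letter b) = (a = b)"
  by (metis inv_inv)

lemma reduce_map_inv: "reduce (map inv_letter w) = map inv_letter (reduce w)"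
proof (induction w)
  case Nil then show ?case by simp
next
  case (Cons a w)
  then show ?case
    by (cases "reduce w") (auto simp: reduce_Cons cr_def inv_inj)
qed

lemma reduce_fg_inv: "reduce (fg_inv w) = fg_inv (reduce w)"
  by (simp add: fg_inv_def reduce_rev reduce_map_inv)

lemma reduce_inv_cancel: "reduce (x @ fg_inv x @ v) = reduce v"
proof (induction x arbitrary: v)
  case Nil then show ?case by (simp add: fg_inv_def)
next
  case (Cons b x)
  have "reduce ((b # x) @ fg_inv (b # x) @ v) = cr b (reduce (x @ fg_inv x @ (inv_letter b # v)))"
    by (simp add: fg_inv_def reduce_Cons)
  also have "\<dots> = cr b (reduce (inv_letter b # v))" using Cons by simp
  also have "\<dots> = reduce v" by (simp add: reduce_Cons cr_cancel reduced_reduce)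
  finally show ?case .
qed

definition subst :: "(letter \<Rightarrow> word) \<Rightarrow> word \<Rightarrow> word" where
  "subst f w = concat (map f w)"

lemma subst_append[simp]: "subst f (u @ v) = subst f u @ subst f v"
  by (simp add: subst_def)
lemma subst_Cons[simp]: "subst f (a # v) = f a @ subst f v"
  by (simp add: subst_def)
lemma subst_Nil[simp]: "subst f [] = []"
  by (simp add: subst_def)

definition good :: "(letter \<Rightarrow> word) \<Rightarrow> bool" where
  "good f \<longleftrightarrow> (\<forall>a. f (inv_letter a) = fg_inv (f a))"

lemma fg_inv_append: "fg_inv (u @ v) = fg_inv v @ fg_inv u"
  by (simp add: fg_inv_def)

lemma subst_fg_inv: "good f \<Longrightarrow> subst f (fg_inv w) = fg_inv (subst f w)"
  by (induction w) (auto simp: good_def fg_inv_def)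

lemma reduce_subst_cr: "good f \<Longrightarrow> reduce (subst f (cr a u)) = reduce (subst f (a # u))"
proof (cases u)
  case Nil then show ?thesis by (simp add: cr_def)
next
  case (Cons b u')
  assume g: "good f"
  show ?thesis
  proof (cases "b = inv_letter a")
    case True
    have ga: "f (inv_letter a) = fg_inv (f a)" using g unfolding good_def by blast
    have "subst f (a # u) = f a @ fg_inv (f a) @ subst f u'"
      using ga True Cons by simp
    then show ?thesis using True Cons by (simp add: cr_def reduce_inv_cancel)
  next
    case False then show ?thesis using Cons by (simp add: cr_def)
  qed
qed

lemma reduce_subst_reduce: "good f \<Longrightarrow> reduce (subst f (reduce w)) = reduce (subst f w)"
proof (induction w)
  case Nil then show ?case by simp
next
  case (Cons a w)
  have "reduce (subst f (reduce (a # w))) = reduce (subst f (a # reduce w))"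
    using Cons.prems by (simp add: reduce_Cons reduce_subst_cr)
  also have "\<dots> = reduce (f a @ reduce (subst f (reduce w)))"
    by (simp add: reduce_append_right)
  also have "\<dots> = reduce (subst f (a # w))"
    using Cons by (simp add: reduce_append_right)
  finally show ?case .
qed

fun crosses :: "int \<Rightarrow> int \<Rightarrow> edge \<Rightarrow> bool" where
  "crosses p q (Hor i j) = (0 \<le> j \<and> j \<le> p \<and> i * p < j * q \<and> j * q < (i + 1) * p)"
| "crosses p q (Ver i j) = (0 \<le> i \<and> i \<le> q \<and> j * q < i * p \<and> i * p < (j + 1) * q)"
| "crosses p q (Dia i j) = (0 \<le> i + j + 1 \<and> i + j + 1 \<le> p + q \<and>
      i * (p + q) < (i + j + 1) * q \<and> (i + j + 1) * q < (i + 1) * (p + q))"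

fun cp :: "int \<Rightarrow> int \<Rightarrow> edge \<Rightarrow> real" where
  "cp p q (Hor i j) = of_int j / of_int p"
| "cp p q (Ver i j) = of_int i / of_int q"
| "cp p q (Dia i j) = of_int (i + j + 1) / of_int (p + q)"

fun rs :: "int \<Rightarrow> int \<Rightarrow> edge \<Rightarrow> bool" where
  "rs p q (Hor i j) = (2 * q * j < p * (2 * i + 1))"
| "rs p q (Ver i j) = (q * (2 * j + 1) < 2 * p * i)"
| "rs p q (Dia i j) = (q * (2 * j + 1) < p * (2 * i + 1))"

lemma aux_half: "2 * (a::real) = x - y \<Longrightarrow> (a < 0) = (x < y)"
  by (rule iffI) linarith+

lemma rs_eq: "right_side p q (edge_mid e) = rs p q e"
proof (cases e)
  case (Hor i j)
  have "rs p q e \<longleftrightarrow> real_of_int (2 * q * j) < of_int (p * (2 * i + 1))"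
    using Hor by (simp only: of_int_less_iff rs.simps)
  then show ?thesis using Hor
    by (simp add: right_side_def edge_mid_def edge_pt_def field_simps)
next
  case (Ver i j)
  have "rs p q e \<longleftrightarrow> real_of_int (q * (2 * j + 1)) < of_int (2 * p * i)"
    using Ver by (simp only: of_int_less_iff rs.simps)
  then show ?thesis using Ver
    by (simp add: right_side_def edge_mid_def edge_pt_def field_simps)
next
  case (Dia i j)
  have m: "edge_mid e = (of_int i + 1/2, of_int j + 1/2)"
    using Dia by (simp add: edge_mid_def edge_pt_def field_simps)
  have ee: "2 * (real_of_int q * (of_int j + 1/2) - of_int p * (of_int i + 1/2))
        = real_of_int (q * (2 * j + 1)) - of_int (p * (2 * i + 1))"
    by (simp add: algebra_simps)
  have r: "right_side p q (edge_mid e) \<longleftrightarrow> real_of_int q * (of_int j + 1/2) - of_int p * (of_int i + 1/2) < 0"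
    unfolding right_side_def m by (simp only: fst_conv snd_conv)
  have "rs p q e \<longleftrightarrow> real_of_int (q * (2 * j + 1)) < of_int (p * (2 * i + 1))"
    using Dia by (simp only: of_int_less_iff rs.simps)
  moreover have "(real_of_int q * (of_int j + 1/2) - of_int p * (of_int i + 1/2) < 0)
     = (real_of_int (q * (2 * j + 1)) < of_int (p * (2 * i + 1)))"
    using ee by (metis aux_half)
  ultimately show ?thesis using r by simp
qed

lemma edge_letter_eq: "edge_letter p q e = (edge_gen e, rs p q e)"
  by (simp add: edge_letter_def rs_eq)

lemma hor_real:
  fixes P Q I J s :: real
  assumes P: "P > 0" and Q: "Q > 0"
  shows "(0 \<le> s \<and> s \<le> 1 \<and> (\<exists>u. 0 < u \<and> u < 1 \<and> I + u = s * Q \<and> J = s * P))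
     \<longleftrightarrow> (s = J / P \<and> 0 \<le> J \<and> J \<le> P \<and> I * P < J * Q \<and> J * Q < (I + 1) * P)"
proof
  assume h: "0 \<le> s \<and> s \<le> 1 \<and> (\<exists>u. 0 < u \<and> u < 1 \<and> I + u = s * Q \<and> J = s * P)"
  then obtain u where u: "0 < u" "u < 1" "I + u = s * Q" "J = s * P" by blast
  have s: "s = J / P" using u(4) P by simp
  have "I * P < J * Q"
  proof -
    have "I * P < (I + u) * P" using u(1) P by simp
    also have "\<dots> = J * Q" using u(3,4) by simp
    finally show ?thesis .
  qed
  moreover have "J * Q < (I + 1) * P"
  proof -
    have "J * Q = (I + u) * P" using u(3,4) by simp
    also have "\<dots> < (I + 1) * P" using u(2) P by simp
    finally show ?thesis .
  qed
  moreover have "0 \<le> J" "J \<le> P" using h u(4) P by (auto simp: mult_le_cancel_right1)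
  ultimately show "s = J / P \<and> 0 \<le> J \<and> J \<le> P \<and> I * P < J * Q \<and> J * Q < (I + 1) * P"
    using s by blast
next
  assume h: "s = J / P \<and> 0 \<le> J \<and> J \<le> P \<and> I * P < J * Q \<and> J * Q < (I + 1) * P"
  define u where "u = s * Q - I"
  have sQ: "s * Q = J * Q / P" using h by simp
  have "I < s * Q" using h P by (simp add: sQ pos_less_divide_eq)
  moreover have "s * Q < I + 1" using h P by (simp add: sQ pos_divide_less_eq)
  moreover have "J = s * P" using h P by simp
  moreover have "0 \<le> s" "s \<le> 1" using h P by simp_all
  ultimately show "0 \<le> s \<and> s \<le> 1 \<and> (\<exists>u. 0 < u \<and> u < 1 \<and> I + u = s * Q \<and> J = s * P)"
    by (intro conjI exI[of _ "s * Q - I"]) auto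
qed

lemma ri1: "(real_of_int a * of_int b < of_int c * of_int d) = (a * b < c * d)"
  by (simp only: of_int_less_iff[symmetric, where 'a=real]) simp
lemma ri2: "(real_of_int a * of_int b < (of_int c + 1) * of_int d) = (a * b < (c + 1) * d)"
  by (simp only: of_int_less_iff[symmetric, where 'a=real]) simp
lemma ri3: "(real_of_int a * (of_int b + of_int b') < of_int c * of_int d) = (a * (b + b') < c * d)"
  by (simp only: of_int_less_iff[symmetric, where 'a=real]) simp
lemma ri4: "(real_of_int a * of_int b < (of_int c + 1) * (of_int d + of_int d')) = (a * b < (c + 1) * (d + d'))"
  by (simp only: of_int_less_iff[symmetric, where 'a=real]) simp

lemma hits_iff:
  assumes p: "p > 0" and q: "q > 0"
  shows "hits_at p q e s \<longleftrightarrow> crosses p q e \<and> s = cp p q e"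
proof (cases e)
  case (Hor i j)
  have ep: "\<And>u. edge_pt e u = (of_int i + u, of_int j)"
    using Hor by (simp add: edge_pt_def algebra_simps)
  have "hits_at p q e s \<longleftrightarrow> 0 \<le> s \<and> s \<le> 1 \<and> (\<exists>u. 0 < u \<and> u < 1 \<and> of_int i + u = s * of_int q \<and> of_int j = s * of_int p)"
    by (simp add: hits_at_def ep seg_pt_def)
  also have "\<dots> \<longleftrightarrow> (s = of_int j / of_int p \<and> 0 \<le> real_of_int j \<and> real_of_int j \<le> of_int p \<and> of_int i * of_int p < of_int j * real_of_int q \<and> of_int j * of_int q < (of_int i + 1) * real_of_int p)"
    by (rule hor_real) (use p q in auto)
  also have "\<dots> \<longleftrightarrow> crosses p q e \<and> s = cp p q e"
    using Hor by (simp only: ri1 ri2 crosses.simps cp.simps of_int_0_le_iff of_int_le_iff) auto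
  finally show ?thesis .
next
  case (Ver i j)
  have ep: "\<And>u. edge_pt e u = (of_int i, of_int j + u)"
    using Ver by (simp add: edge_pt_def algebra_simps)
  have "hits_at p q e s \<longleftrightarrow> 0 \<le> s \<and> s \<le> 1 \<and> (\<exists>u. 0 < u \<and> u < 1 \<and> of_int j + u = s * of_int p \<and> of_int i = s * of_int q)"
    by (auto simp: hits_at_def ep seg_pt_def)
  also have "\<dots> \<longleftrightarrow> (s = of_int i / of_int q \<and> 0 \<le> real_of_int i \<and> real_of_int i \<le> of_int q \<and> of_int j * of_int q < of_int i * real_of_int p \<and> of_int i * of_int p < (of_int j + 1) * real_of_int q)"
    by (rule hor_real) (use p q in auto)
  also have "\<dots> \<longleftrightarrow> crosses p q e \<and> s = cp p q e"
    using Ver by (simp only: ri1 ri2 crosses.simps cp.simps of_int_0_le_iff of_int_le_iff) auto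
  finally show ?thesis .
next
  case (Dia i j)
  have ep: "\<And>u. edge_pt e u = (of_int i + u, of_int j + 1 - u)"
    using Dia by (simp add: edge_pt_def algebra_simps)
  have "hits_at p q e s \<longleftrightarrow> 0 \<le> s \<and> s \<le> 1 \<and> (\<exists>u. 0 < u \<and> u < 1 \<and> of_int i + u = s * of_int q \<and> of_int j + 1 - u = s * of_int p)"
    by (simp add: hits_at_def ep seg_pt_def)
  also have "\<dots> \<longleftrightarrow> 0 \<le> s \<and> s \<le> 1 \<and> (\<exists>u. 0 < u \<and> u < 1 \<and> of_int i + u = s * of_int q \<and> of_int (i + j + 1) = s * (of_int p + of_int q))"
    by (intro conj_cong refl ex_cong) (auto simp: algebra_simps)
  also have "\<dots> \<longleftrightarrow> (s = of_int (i + j + 1) / (of_int p + of_int q) \<and> 0 \<le> real_of_int (i + j + 1) \<and> real_of_int (i + j + 1) \<le> of_int p + of_int q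
       \<and> of_int i * (of_int p + of_int q) < of_int (i + j + 1) * real_of_int q \<and> of_int (i + j + 1) * of_int q < (of_int i + 1) * (of_int p + real_of_int q))"
    by (rule hor_real) (use p q in auto)
  also have "\<dots> \<longleftrightarrow> crosses p q e \<and> s = cp p q e"
  proof -
    have d1: "(real_of_int i * (of_int p + of_int q) < of_int (i + j + 1) * real_of_int q) = (i * (p + q) < (i + j + 1) * q)"
      by (simp only: of_int_less_iff[symmetric, where 'a=real]) simp
    have d2: "(real_of_int (i + j + 1) * of_int q < (of_int i + 1) * (of_int p + real_of_int q)) = ((i + j + 1) * q < (i + 1) * (p + q))"
      by (simp only: of_int_less_iff[symmetric, where 'a=real]) simp
    have d3: "(0 \<le> real_of_int (i + j + 1)) = (0 \<le> i + j + 1)" by (simp only: of_int_0_le_iff)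
    have d4: "(real_of_int (i + j + 1) \<le> of_int p + of_int q) = (i + j + 1 \<le> p + q)"
      by (simp only: of_int_le_iff[symmetric, where 'a=real]) simp
    show ?thesis unfolding d1 d2 d3 d4 using Dia by auto
  qed
  finally show ?thesis .
qed

lemma sorted_key_unique:
  fixes f :: "'a \<Rightarrow> real"
  shows "sorted_wrt (\<lambda>a b. f a < f b) xs \<Longrightarrow> sorted_wrt (\<lambda>a b. f a < f b) ys \<Longrightarrow> set xs = set ys \<Longrightarrow> xs = ys"
proof (induction xs arbitrary: ys)
  case Nil then show ?case by simp
next
  case (Cons x xs)
  then obtain y ys' where ys: "ys = y # ys'" by (cases ys) auto
  have "x = y"
  proof (rule ccontr)
    assume ne: "x \<noteq> y"
    then have "y \<in> set xs" using Cons.prems ys by auto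
    then have "f x < f y" using Cons.prems(1) by auto
    moreover have "x \<in> set ys'" using Cons.prems ys ne by auto
    then have "f y < f x" using Cons.prems(2) ys by auto
    ultimately show False by simp
  qed
  moreover have "x \<notin> set xs" using Cons.prems(1) by auto
  moreover have "y \<notin> set ys'" using Cons.prems(2) ys by auto
  ultimately have "set xs = set ys'" using Cons.prems(3) ys by auto
  then show ?case using Cons ys \<open>x = y\<close> by auto
qed

lemma crossing_edges_eq: "p > 0 \<Longrightarrow> q > 0 \<Longrightarrow> crossing_edges p q = {e. crosses p q e}"
  by (auto simp: crossing_edges_def hits_iff)

lemma cross_param_eq: "p > 0 \<Longrightarrow> q > 0 \<Longrightarrow> crosses p q e \<Longrightarrow> cross_param p q e = cp p q e"
  unfolding cross_param_def by (rule the_equality) (auto simp: hits_iff)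

lemma crossing_list_char:
  assumes p: "p > 0" and q: "q > 0" and S: "set L = {e. crosses p q e}"
    and srt: "sorted_wrt (\<lambda>e e'. cp p q e < cp p q e') L"
  shows "crossing_list p q = L"
  unfolding crossing_list_def
proof (rule the_equality)
  show "set L = crossing_edges p q \<and> sorted_wrt (\<lambda>e e'. cross_param p q e < cross_param p q e') L"
    using S srt p q
    by (auto simp: crossing_edges_eq cross_param_eq intro: sorted_wrt_mono_rel[OF _ srt])
next
  fix es assume h: "set es = crossing_edges p q \<and> sorted_wrt (\<lambda>e e'. cross_param p q e < cross_param p q e') es"
  have "sorted_wrt (\<lambda>e e'. cp p q e < cp p q e') es"
    using h p q by (auto simp: crossing_edges_eq cross_param_eq intro: sorted_wrt_mono_rel[OF _ conjunct2[OF h]])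
  then show "es = L" using sorted_key_unique[OF _ srt] h S p q by (simp add: crossing_edges_eq)
qed

lemma sorted_concat_blocks:
  assumes "sorted_wrt (<) (ks :: int list)"
    and "\<And>k. k \<in> set ks \<Longrightarrow> sorted_wrt R (B k)"
    and "\<And>k k' x y. k \<in> set ks \<Longrightarrow> k' \<in> set ks \<Longrightarrow> k < k' \<Longrightarrow> x \<in> set (B k) \<Longrightarrow> y \<in> set (B k') \<Longrightarrow> R x y"
  shows "sorted_wrt R (concat (map B ks))"
  using assms
proof (induction ks)
  case Nil then show ?case by simp
next
  case (Cons k ks)
  have "sorted_wrt R (concat (map B ks))"
    apply (rule Cons.IH)
    using Cons.prems(1) apply simp
    using Cons.prems(2) apply simp
    using Cons.prems(3) apply (meson list.set_intros(2))
    done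
  moreover have "\<forall>x\<in>set (B k). \<forall>y\<in>set (concat (map B ks)). R x y"
  proof (intro ballI)
    fix x y assume x: "x \<in> set (B k)" and y: "y \<in> set (concat (map B ks))"
    then obtain k' where k': "k' \<in> set ks" "y \<in> set (B k')" by auto
    have "k < k'" using Cons.prems(1) k' by auto
    then show "R x y" using Cons.prems(3)[of k k' x y] x k' by auto
  qed
  ultimately show ?case using Cons.prems by (simp add: sorted_wrt_append)
qed

lemma frac_less_int:
  assumes "b > 0" "d > 0"
  shows "(real_of_int a / of_int b < of_int c / of_int d) = (a * d < c * b)"
proof -
  have "(a * d < c * b) = (real_of_int (a * d) < of_int (c * b))" by (simp only: of_int_less_iff)
  then show ?thesis using assms by (simp add: field_simps)
qed

lemma frac_le_int:
  assumes "b > 0" "d > 0"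
  shows "(real_of_int a / of_int b \<le> of_int c / of_int d) = (a * d \<le> c * b)"
proof -
  have "(a * d \<le> c * b) = (real_of_int (a * d) \<le> of_int (c * b))" by (simp only: of_int_le_iff)
  then show ?thesis using assms by (simp add: field_simps)
qed

lemma lt_cancel: "(0::int) < n \<Longrightarrow> a * n < b * n \<Longrightarrow> a < b"
  by (simp add: mult_less_cancel_right)
lemma le_cancel: "(0::int) < n \<Longrightarrow> a * n \<le> b * n \<Longrightarrow> a \<le> b"
  by (simp add: mult_le_cancel_right)

lemma floor_unique: "(0::int) < n \<Longrightarrow> a * n \<le> x \<Longrightarrow> x < (a + 1) * n \<Longrightarrow> b * n \<le> x \<Longrightarrow> x < (b + 1) * n \<Longrightarrow> a = b"
proof -
  assume h: "0 < n" "a * n \<le> x" "x < (a + 1) * n" "b * n \<le> x" "x < (b + 1) * n"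
  have "a < b + 1" using h lt_cancel[of n a "b+1"] by linarith
  moreover have "b < a + 1" using h lt_cancel[of n b "a+1"] by linarith
  ultimately show "a = b" by linarith
qed

lemma div_lower: "(0::int) < n \<Longrightarrow> (x div n) * n \<le> x"
  using pos_mod_sign[of n x] minus_mod_eq_div_mult[of x n] by linarith
lemma div_upper: "(0::int) < n \<Longrightarrow> x < (x div n + 1) * n"
proof -
  assume n: "0 < n"
  have "(x div n + 1) * n = x div n * n + n" by (simp add: distrib_right)
  then show ?thesis using pos_mod_bound[OF n, of x] minus_mod_eq_div_mult[of x n] by linarith
qed
lemma div_eqI: "(0::int) < n \<Longrightarrow> a * n \<le> x \<Longrightarrow> x < (a + 1) * n \<Longrightarrow> x div n = a"
  using floor_unique div_lower div_upper by blast

definition ik :: "int \<Rightarrow> int \<Rightarrow> int \<Rightarrow> int" where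
  "ik p q k = (k * q) div (p + q)"

definition dE :: "int \<Rightarrow> int \<Rightarrow> int \<Rightarrow> edge" where
  "dE p q k = Dia (ik p q k) (k - 1 - ik p q k)"

definition mE :: "int \<Rightarrow> int \<Rightarrow> int \<Rightarrow> edge" where
  "mE p q k = (if ik p q (k + 1) = ik p q k + 1 then Ver (ik p q k + 1) (k - 1 - ik p q k)
               else Hor (ik p q k) (k - ik p q k))"

definition DB :: "int \<Rightarrow> int \<Rightarrow> int \<Rightarrow> edge list" where
  "DB p q k = dE p q k # (if k + 1 < p + q then [mE p q k] else [])"

definition DLst :: "int \<Rightarrow> int \<Rightarrow> edge list" where
  "DLst p q = concat (map (DB p q) [1..p + q - 1])"

locale cpq =
  fixes p q :: int
  assumes p: "p > 0" and q: "q > 0" and cop: "coprime p q"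
begin

abbreviation "N \<equiv> p + q"
abbreviation "I \<equiv> ik p q"

lemma Npos: "N > 0" using p q by simp

lemma ndvd: "0 < k \<Longrightarrow> k < N \<Longrightarrow> \<not> N dvd (k * q)"
proof
  assume k: "0 < k" "k < N" and d: "N dvd k * q"
  have "coprime N q" using cop by (simp add: coprime_iff_gcd_eq_1)
  then have "N dvd k" using d by (simp add: coprime_dvd_mult_left_iff)
  then have "N \<le> k" using k by (simp add: zdvd_imp_le)
  then show False using k by simp
qed

lemma F1w: "I k * N \<le> k * q"
  unfolding ik_def using div_lower[OF Npos] by blast

lemma F2: "k * q < (I k + 1) * N"
  unfolding ik_def using div_upper[OF Npos] by blast

lemma F1: assumes "0 < k" "k < N" shows "I k * N < k * q"
proof -
  have "I k * N \<noteq> k * q"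
  proof
    assume "I k * N = k * q"
    then have "N dvd k * q" by (metis dvd_triv_right)
    then show False using ndvd assms by blast
  qed
  then show ?thesis using F1w[of k] by simp
qed

lemma I_eqI: "a * N \<le> k * q \<Longrightarrow> k * q < (a + 1) * N \<Longrightarrow> I k = a"
  unfolding ik_def using div_eqI[OF Npos] by blast

lemma B1: assumes "0 \<le> k" shows "0 \<le> I k"
proof -
  have "0 \<le> k * q" using assms q by simp
  then have "0 * N < (I k + 1) * N" using F2[of k] by simp
  then have "0 < I k + 1" using lt_cancel[OF Npos] by blast
  then show ?thesis by simp
qed

lemma B2: assumes "0 < k" "k < N" shows "I k \<le> k - 1"
proof -
  have "k * q < k * N" using assms p by simp
  then have "I k * N < k * N" using F1[OF assms] by simp
  then have "I k < k" using lt_cancel[OF Npos] by blast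
  then show ?thesis by simp
qed

lemma B3: assumes "0 < k" "k < N" shows "I k \<le> q - 1"
proof -
  have "k * q < q * N" using assms q by (simp add: mult.commute)
  then have "I k * N < q * N" using F1[OF assms] by simp
  then have "I k < q" using lt_cancel[OF Npos] by blast
  then show ?thesis by simp
qed

lemma B4: assumes "0 < k" "k < N" shows "k - 1 - I k \<le> p - 1"
proof -
  have "(k - 1 - I k) * N < k * p" using F2[of k] by (simp add: algebra_simps)
  also have "k * p < p * N" using assms p by (simp add: mult.commute)
  finally have "k - 1 - I k < p" using lt_cancel[OF Npos] by blast
  then show ?thesis by simp
qed

lemma step: "I k \<le> I (k + 1) \<and> I (k + 1) \<le> I k + 1"
proof
  have e: "(k + 1) * q = k * q + q" by (simp add: algebra_simps)
  have "I k * N < (I (k + 1) + 1) * N" using F1w[of k] F2[of "k+1"] q e by linarith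
  then have "I k < I (k + 1) + 1" using lt_cancel[OF Npos] by blast
  then show "I k \<le> I (k + 1)" by simp
next
  have e: "(k + 1) * q = k * q + q" by (simp add: algebra_simps)
  have e2: "(I k + 2) * N = (I k + 1) * N + N" by (simp add: algebra_simps)
  have "I (k + 1) * N < (I k + 2) * N" using F1w[of "k+1"] F2[of k] p e e2 by linarith
  then have "I (k + 1) < I k + 2" using lt_cancel[OF Npos] by blast
  then show "I (k + 1) \<le> I k + 1" by simp
qed

lemma I_last: "I (N - 1) = q - 1"
  by (rule I_eqI) (use p q in \<open>simp_all add: algebra_simps\<close>)

lemma dE_crosses: assumes "0 < k" "k < N" shows "crosses p q (dE p q k)"
  using F1[OF assms] F2[of k] assms by (simp add: dE_def)

lemma mE_crosses: assumes "0 < k" "k + 1 < N" shows "crosses p q (mE p q k)"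
proof (cases "I (k + 1) = I k + 1")
  case True
  have a: "I k * N < k * q" "k * q < (I k + 1) * N" using F1[of k] F2[of k] assms by auto
  have b: "(I k + 1) * N < (k + 1) * q" using F1[of "k+1"] True assms by auto
  have c: "0 \<le> I k" "I k \<le> q - 1" using B1[of k] B3[of k] assms by auto
  show ?thesis using True a b c by (simp add: mE_def algebra_simps)
next
  case False
  then have eq: "I (k + 1) = I k" using step[of k] by auto
  have a: "I k * N < k * q" using F1[of k] assms by auto
  have b: "(k + 1) * q < (I k + 1) * N" using F2[of "k+1"] eq by auto
  have c: "I k \<le> k - 1" "k - 1 - I k \<le> p - 1" using B2[of k] B4[of k] assms by auto
  show ?thesis using False a b c by (simp add: mE_def algebra_simps)
qed

lemma DLst_crosses: "e \<in> set (DLst p q) \<Longrightarrow> crosses p q e"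
  by (auto simp: DLst_def DB_def dE_crosses mE_crosses split: if_splits)

lemma in_DLst: assumes "0 < k" "k < N" "e \<in> set (DB p q k)" shows "e \<in> set (DLst p q)"
proof -
  have "k \<in> set [1..N - 1]" using assms by simp
  then show ?thesis unfolding DLst_def using assms(3) by (simp only: set_concat set_map) blast
qed

lemma dE_in: "0 < k \<Longrightarrow> k < N \<Longrightarrow> dE p q k \<in> set (DLst p q)"
  by (rule in_DLst[of k]) (auto simp: DB_def)

lemma mE_in: "0 < k \<Longrightarrow> k + 1 < N \<Longrightarrow> mE p q k \<in> set (DLst p q)"
  by (rule in_DLst[of k]) (auto simp: DB_def)

lemma crosses_DLst: assumes "crosses p q e" shows "e \<in> set (DLst p q)"
proof (cases e)
  case (Dia i j)
  define k where "k = i + j + 1"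
  have h: "0 \<le> k" "k \<le> N" "i * N < k * q" "k * q < (i + 1) * N"
    using assms Dia by (auto simp: k_def)
  have "k \<noteq> 0"
  proof
    assume "k = 0"
    then have "i * N < 0 * N" "0 * N < (i + 1) * N" using h by auto
    then have "i < 0" "0 < i + 1" using lt_cancel[OF Npos] by blast+
    then show False by simp
  qed
  moreover have "k \<noteq> N"
  proof
    assume "k = N"
    then have "i * N < q * N" "q * N < (i + 1) * N" using h by (auto simp: mult.commute)
    then have "i < q" "q < i + 1" using lt_cancel[OF Npos] by blast+
    then show False by simp
  qed
  ultimately have k: "0 < k" "k < N" using h by auto
  have "I k = i" using h by (intro I_eqI) auto
  then have "e = dE p q k" using Dia by (simp add: dE_def k_def)
  then show ?thesis using k by (simp add: dE_in mE_in)
next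
  case (Ver i j)
  have h: "0 \<le> i" "i \<le> q" "j * q < i * p" "i * p < (j + 1) * q"
    using assms unfolding Ver crosses.simps by blast+
  have i0: "i \<noteq> 0"
  proof
    assume i: "i = 0"
    have "j * q < 0 * q" using h(3) i by simp
    moreover have "0 * q < (j + 1) * q" using h(4) i by simp
    ultimately have "j < 0" "0 < j + 1" using lt_cancel[OF q] by blast+
    then show False by simp
  qed
  have iq: "i \<noteq> q"
  proof
    assume i: "i = q"
    have "j * q < p * q" using h(3) i by (simp only: mult.commute)
    moreover have "p * q < (j + 1) * q" using h(4) i by (simp only: mult.commute)
    ultimately have "j < p" "p < j + 1" using lt_cancel[OF q] by blast+
    then show False by simp
  qed
  have j0: "0 \<le> j"
  proof -
    have "0 \<le> i * p" using h(1) p by simp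
    then have "0 * q < (j + 1) * q" using h(4) by simp
    then have "0 < j + 1" using lt_cancel[OF q] by blast
    then show ?thesis by simp
  qed
  have jp: "j < p"
  proof -
    have "i < q" using h(2) iq by simp
    then have "i * p < q * p" using mult_strict_right_mono[OF _ p] by blast
    then have "j * q < p * q" using h(3) by (simp only: mult.commute)
    then show ?thesis using lt_cancel[OF q] by blast
  qed
  define k where "k = i + j"
  have x1: "(i - 1) * N = i * p + i * q - p - q" "k * q = i * q + j * q" "(i - 1 + 1) * N = i * p + i * q"
    "(k + 1) * q = i * q + j * q + q" "i * N = i * p + i * q" "(i + 1) * N = i * p + i * q + p + q"
    "(j + 1) * q = j * q + q"
    by (simp_all add: k_def algebra_simps)
  have I1: "I k = i - 1" using h p by (intro I_eqI) (simp_all add: k_def algebra_simps)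
  have I2: "I (k + 1) = i" using h p by (intro I_eqI) (simp_all add: k_def algebra_simps)
  have k: "0 < k" "k + 1 < N" using h i0 iq j0 jp by (auto simp: k_def)
  have c: "I (k + 1) = I k + 1" using I1 I2 by simp
  have "mE p q k = Ver (I k + 1) (k - 1 - I k)" unfolding mE_def using c by (simp only: if_True refl simp_thms)
  also have "\<dots> = Ver i j" using I1 by (simp add: k_def)
  finally have "e = mE p q k" using Ver by simp
  then show ?thesis using k by (simp add: dE_in mE_in)
next
  case (Hor i j)
  have h: "0 \<le> j" "j \<le> p" "i * p < j * q" "j * q < (i + 1) * p"
    using assms unfolding Hor crosses.simps by blast+
  have j0: "j \<noteq> 0"
  proof
    assume j: "j = 0"
    have "i * p < 0 * p" using h(3) j by simp
    moreover have "0 * p < (i + 1) * p" using h(4) j by simp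
    ultimately have "i < 0" "0 < i + 1" using lt_cancel[OF p] by blast+
    then show False by simp
  qed
  have jp: "j \<noteq> p"
  proof
    assume j: "j = p"
    have "i * p < q * p" using h(3) j by (simp only: mult.commute)
    moreover have "q * p < (i + 1) * p" using h(4) j by (simp only: mult.commute)
    ultimately have "i < q" "q < i + 1" using lt_cancel[OF p] by blast+
    then show False by simp
  qed
  have i0: "0 \<le> i"
  proof -
    have "0 \<le> j * q" using h(1) q by simp
    then have "0 * p < (i + 1) * p" using h(4) by simp
    then have "0 < i + 1" using lt_cancel[OF p] by blast
    then show ?thesis by simp
  qed
  have iq: "i < q"
  proof -
    have "j < p" using h(2) jp by simp
    then have "j * q < p * q" using mult_strict_right_mono[OF _ q] by blast
    then have "i * p < q * p" using h(3) by (simp only: mult.commute)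
    then show ?thesis using lt_cancel[OF p] by blast
  qed
  define k where "k = i + j"
  have x1: "k * q = i * q + j * q" "(k + 1) * q = i * q + j * q + q" "i * N = i * p + i * q"
    "(i + 1) * N = i * p + i * q + p + q" "(i + 1) * p = i * p + p"
    by (simp_all add: k_def algebra_simps)
  have I1: "I k = i" using h p q by (intro I_eqI) (simp_all add: k_def algebra_simps)
  have I2: "I (k + 1) = i" using h p q by (intro I_eqI) (simp_all add: k_def algebra_simps)
  have k: "0 < k" "k + 1 < N" using h i0 iq j0 jp by (auto simp: k_def)
  have c: "I (k + 1) \<noteq> I k + 1" using I1 I2 by simp
  have "mE p q k = Hor (I k) (k - I k)" unfolding mE_def using c by (simp only: if_False simp_thms)
  also have "\<dots> = Hor i j" using I1 by (simp add: k_def)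
  finally have "e = mE p q k" using Hor by simp
  then show ?thesis using k by (simp add: dE_in mE_in)
qed

end

context cpq
begin

lemma cp_dE: "cp p q (dE p q k) = of_int k / of_int N"
  by (simp add: dE_def)

lemma mE_bounds:
  assumes k: "0 < k" "k + 1 < N"
  shows "of_int k / of_int N < cp p q (mE p q k) \<and> cp p q (mE p q k) < of_int (k + 1) / of_int N"
proof (cases "I (k + 1) = I k + 1")
  case True
  have cpe: "cp p q (mE p q k) = of_int (I k + 1) / of_int q" using True by (simp add: mE_def)
  have a: "k * q < (I k + 1) * N" using F2[of k] .
  have b: "(I k + 1) * N < (k + 1) * q" using F1[of "k+1"] True k by simp
  show ?thesis unfolding cpe using a b by (simp only: frac_less_int[OF Npos q] frac_less_int[OF q Npos])
next
  case False
  then have eq: "I (k + 1) = I k" using step[of k] by auto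
  have cpe: "cp p q (mE p q k) = of_int (k - I k) / of_int p" using False by (simp add: mE_def)
  have a: "I k * N < k * q" using F1[of k] k by simp
  have b: "(k + 1) * q < (I k + 1) * N" using F2[of "k+1"] eq by simp
  have a': "k * p < (k - I k) * N" using a by (simp add: algebra_simps)
  have b': "(k - I k) * N < (k + 1) * p" using b by (simp add: algebra_simps)
  show ?thesis unfolding cpe using a' b' by (simp only: frac_less_int[OF Npos p] frac_less_int[OF p Npos])
qed

lemma dE_bounds: "of_int k / of_int N \<le> cp p q (dE p q k) \<and> cp p q (dE p q k) < of_int (k + 1) / of_int N"
  unfolding cp_dE using Npos by (simp only: frac_less_int[OF Npos Npos] order_refl) (simp add: algebra_simps)

lemma DB_bounds:
  assumes k: "0 < k" "k < N" and e: "e \<in> set (DB p q k)"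
  shows "of_int k / of_int N \<le> cp p q e \<and> cp p q e < of_int (k + 1) / of_int N"
proof (cases "e = dE p q k")
  case True then show ?thesis using dE_bounds by simp
next
  case False
  then have e': "e = mE p q k" and k1: "k + 1 < N" using e by (auto simp: DB_def split: if_splits)
  then show ?thesis using mE_bounds[OF k(1) k1] by (simp add: less_imp_le)
qed

lemma DB_sorted:
  assumes k: "0 < k" "k < N"
  shows "sorted_wrt (\<lambda>e e'. cp p q e < cp p q e') (DB p q k)"
proof (cases "k + 1 < N")
  case True
  have "cp p q (dE p q k) < cp p q (mE p q k)"
    using mE_bounds[OF k(1) True] by (simp add: cp_dE)
  then show ?thesis using True by (simp add: DB_def)
next
  case False then show ?thesis by (simp add: DB_def)
qed

lemma DLst_sorted: "sorted_wrt (\<lambda>e e'. cp p q e < cp p q e') (DLst p q)"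
  unfolding DLst_def
proof (rule sorted_concat_blocks)
  show "sorted_wrt (<) [1..N - 1]" by simp
next
  fix k assume "k \<in> set [1..N - 1]"
  then show "sorted_wrt (\<lambda>e e'. cp p q e < cp p q e') (DB p q k)" by (intro DB_sorted) auto
next
  fix k k' x y assume kk: "k \<in> set [1..N - 1]" "k' \<in> set [1..N - 1]" "k < k'"
    and x: "x \<in> set (DB p q k)" and y: "y \<in> set (DB p q k')"
  have "cp p q x < of_int (k + 1) / of_int N" using DB_bounds[OF _ _ x] kk by auto
  also have "\<dots> \<le> of_int k' / of_int N"
    using kk by (simp only: frac_le_int[OF Npos Npos]) (simp add: mult_right_mono Npos less_imp_le)
  also have "\<dots> \<le> cp p q y" using DB_bounds[OF _ _ y] kk by auto
  finally show "cp p q x < cp p q y" .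
qed

theorem crossing_list_DLst: "crossing_list p q = DLst p q"
  by (rule crossing_list_char[OF p q]) (auto simp: DLst_crosses crosses_DLst DLst_sorted)

end

fun reflE :: "int \<Rightarrow> int \<Rightarrow> edge \<Rightarrow> edge" where
  "reflE p q (Hor i j) = Ver (p - j) (q - i - 1)"
| "reflE p q (Ver i j) = Hor (p - j - 1) (q - i)"
| "reflE p q (Dia i j) = Dia (p - j - 1) (q - i - 1)"

lemma refl_refl: "reflE q p (reflE p q e) = e"
  by (cases e) auto

lemma crosses_refl: "crosses q p (reflE p q e) = crosses p q e"
proof (cases e)
  case (Hor i j) then show ?thesis by (simp add: algebra_simps) (rule iffI; elim conjE; intro conjI; linarith)
next
  case (Ver i j) then show ?thesis by (simp add: algebra_simps) (rule iffI; elim conjE; intro conjI; linarith)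
next
  case (Dia i j) then show ?thesis by (simp add: algebra_simps) (rule iffI; elim conjE; intro conjI; linarith)
qed

lemma cp_refl: "p > 0 \<Longrightarrow> q > 0 \<Longrightarrow> cp q p (reflE p q e) = 1 - cp p q e"
  by (cases e) (simp_all add: field_simps)

lemma rs_refl: "rs q p (reflE p q e) = rs p q e"
proof (cases e)
  case (Hor i j) then show ?thesis by (simp add: algebra_simps)
next
  case (Ver i j) then show ?thesis by (simp add: algebra_simps)
next
  case (Dia i j) then show ?thesis by (simp add: algebra_simps)
qed

lemma letter_refl: "edge_letter q p (reflE p q e) = sw (edge_letter p q e)"
  by (cases e) (simp_all add: edge_letter_eq sw_def rs_refl del: reflE.simps rs.simps, simp_all)


definition Wd :: "int \<Rightarrow> int \<Rightarrow> word" where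
  "Wd p q = map (edge_letter p q) (crossing_list p q)"

context cpq
begin

lemma CL_set: "set (crossing_list p q) = {e. crosses p q e}"
  using crossing_list_DLst DLst_crosses crosses_DLst by auto

lemma CL_sorted: "sorted_wrt (\<lambda>e e'. cp p q e < cp p q e') (crossing_list p q)"
  using crossing_list_DLst DLst_sorted by simp

lemma crossing_list_sym: "crossing_list q p = rev (map (reflE p q) (crossing_list p q))"
proof (rule crossing_list_char[OF q p])
  show "set (rev (map (reflE p q) (crossing_list p q))) = {e. crosses q p e}"
  proof
    show "set (rev (map (reflE p q) (crossing_list p q))) \<subseteq> {e. crosses q p e}"
      using CL_set crosses_refl by auto
  next
    show "{e. crosses q p e} \<subseteq> set (rev (map (reflE p q) (crossing_list p q)))"
    proof
      fix x assume "x \<in> {e. crosses q p e}"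
      then have "crosses p q (reflE q p x)" using crosses_refl[of p q "reflE q p x"] refl_refl[of p q x]
        by (metis crosses_refl mem_Collect_eq)
      then have "reflE q p x \<in> set (crossing_list p q)" using CL_set by auto
      then show "x \<in> set (rev (map (reflE p q) (crossing_list p q)))"
        using refl_refl[of p q x] by (metis imageI set_map set_rev)
    qed
  qed
next
  show "sorted_wrt (\<lambda>e e'. cp q p e < cp q p e') (rev (map (reflE p q) (crossing_list p q)))"
    unfolding sorted_wrt_rev sorted_wrt_map
    by (rule sorted_wrt_mono_rel[OF _ CL_sorted]) (simp add: cp_refl[OF p q])
qed

lemma W_sym: "Wd q p = rev (map sw (Wd p q))"
  unfolding Wd_def crossing_list_sym by (simp add: rev_map letter_refl comp_def)

end

definition rk :: "int \<Rightarrow> int \<Rightarrow> int \<Rightarrow> int" where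
  "rk p q k = k - 1 - ik p q k"

definition TB :: "int \<Rightarrow> int \<Rightarrow> int \<Rightarrow> edge list" where
  "TB p q k = Ver k (rk p q k) # Dia k (rk p q k) #
     (if k + 1 < p + q \<and> ik p q (k + 1) = ik p q k then [Hor k (rk p q k + 1), Dia k (rk p q k + 1)] else [])"

definition TLst :: "int \<Rightarrow> int \<Rightarrow> edge list" where
  "TLst p q = Dia 0 0 # concat (map (TB p q) [1..p + q - 1])"

context cpq
begin

abbreviation "R \<equiv> rk p q"

lemma T1: assumes "0 < k" "k < N" shows "R k * N < k * p"
proof -
  have "k * q < (I k + 1) * N" using F2[of k] .
  then show ?thesis by (simp add: rk_def algebra_simps)
qed

lemma T2: assumes "0 < k" "k < N" shows "k * p < (R k + 1) * N"
proof -
  have "I k * N < k * q" using F1[OF assms] .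
  then show ?thesis by (simp add: rk_def algebra_simps)
qed

lemma R0: "0 < k \<Longrightarrow> k < N \<Longrightarrow> 0 \<le> R k"
  using B2[of k] by (simp add: rk_def)

lemma Rp: "0 < k \<Longrightarrow> k < N \<Longrightarrow> R k \<le> p - 1"
  using B4[of k] by (simp add: rk_def)

lemma Rstep: "R (k + 1) = (if I (k + 1) = I k then R k + 1 else R k)"
  using step[of k] by (auto simp: rk_def)

lemma Rlast: "R (N - 1) = p - 1"
  using I_last by (simp add: rk_def)

lemma Mpos: "0 < p + N" using p q by simp

lemma TB_crosses: assumes k: "0 < k" "k < N" and e: "e \<in> set (TB p q k)"
  shows "crosses p N e"
proof -
  have t1: "R k * N < k * p" and t2: "k * p < (R k + 1) * N" using T1[OF k] T2[OF k] by auto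
  have r0: "0 \<le> R k" and rp: "R k \<le> p - 1" using R0[OF k] Rp[OF k] by auto
  have v: "crosses p N (Ver k (R k))" using t1 t2 k by simp
  have d: "crosses p N (Dia k (R k))" using t1 t2 k r0 rp p by (simp add: algebra_simps)
  show ?thesis
  proof (cases "k + 1 < N \<and> I (k + 1) = I k")
    case True
    have r1: "R (k + 1) = R k + 1" using True Rstep[of k] by simp
    have t3: "(R k + 1) * N < (k + 1) * p" using T1[of "k+1"] True k r1 by simp
    have rp1: "R k + 1 \<le> p - 1" using Rp[of "k+1"] r1 True k by simp
    have h: "crosses p N (Hor k (R k + 1))" using t2 t3 r0 rp1 by simp
    have d2: "crosses p N (Dia k (R k + 1))" using t2 t3 k r0 rp1 p by (simp add: algebra_simps)
    show ?thesis using e v d h d2 True by (auto simp: TB_def)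
  next
    case False
    then show ?thesis using e v d by (auto simp: TB_def)
  qed
qed

lemma TLst_crosses: "e \<in> set (TLst p q) \<Longrightarrow> crosses p N e"
proof -
  assume e: "e \<in> set (TLst p q)"
  show "crosses p N e"
  proof (cases "e = Dia 0 0")
    case True then show ?thesis using p q by simp
  next
    case False
    then obtain k where "k \<in> set [1..N - 1]" "e \<in> set (TB p q k)" using e by (auto simp: TLst_def)
    then show ?thesis using TB_crosses[of k e] by simp
  qed
qed


lemma in_TLst: assumes "0 < k" "k < N" "e \<in> set (TB p q k)" shows "e \<in> set (TLst p q)"
proof -
  have "k \<in> set [1..N - 1]" using assms by simp
  then show ?thesis unfolding TLst_def using assms(3) by (simp only: set_concat set_map list.set) blast
qed

lemma crosses_TLst: assumes c: "crosses p N e" shows "e \<in> set (TLst p q)"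
proof (cases e)
  case (Ver c j)
  have h: "0 \<le> c" "c \<le> N" "j * N < c * p" "c * p < (j + 1) * N"
    using c unfolding Ver crosses.simps by blast+
  have c0: "c \<noteq> 0"
  proof
    assume c0: "c = 0"
    have "j * N < 0 * N" using h(3) c0 by simp
    moreover have "0 * N < (j + 1) * N" using h(4) c0 by simp
    ultimately have "j < 0" "0 < j + 1" using lt_cancel[OF Npos] by blast+
    then show False by simp
  qed
  have cN: "c \<noteq> N"
  proof
    assume cN: "c = N"
    have "j * N < p * N" using h(3) cN by (simp only: mult.commute)
    moreover have "p * N < (j + 1) * N" using h(4) cN by (simp only: mult.commute)
    ultimately have "j < p" "p < j + 1" using lt_cancel[OF Npos] by blast+
    then show False by simp
  qed
  have k: "0 < c" "c < N" using h c0 cN by auto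
  have "j = R c"
    using floor_unique[OF Npos, of j "c * p" "R c"] h T1[OF k] T2[OF k] by simp
  then have "e \<in> set (TB p q c)" using Ver by (simp add: TB_def)
  then show ?thesis using in_TLst[OF k] by blast
next
  case (Hor c j)
  have h: "0 \<le> j" "j \<le> p" "c * p < j * N" "j * N < (c + 1) * p"
    using c unfolding Hor crosses.simps by blast+
  have c1: "1 \<le> c"
  proof (rule ccontr)
    assume "\<not> 1 \<le> c"
    then have "c + 1 \<le> 1" by simp
    show False
    proof (cases "c + 1 \<le> 0")
      case True
      then have "(c + 1) * p \<le> 0" using p by (simp add: mult_nonpos_nonneg)
      moreover have "0 \<le> j * N" using h(1) Npos by simp
      ultimately show False using h(4) by linarith
    next
      case False
      then have c0: "c = 0" using \<open>c + 1 \<le> 1\<close> by simp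
      have "0 * N < j * N" using h(3) c0 by simp
      then have "0 < j" using lt_cancel[OF Npos] by blast
      then have "1 * N \<le> j * N" using Npos by (simp add: mult_right_mono)
      then show False using h(4) c0 q by simp
    qed
  qed
  have c2: "c \<le> N - 2"
  proof (rule ccontr)
    assume "\<not> c \<le> N - 2"
    then have cN: "N - 1 \<le> c" by simp
    show False
    proof (cases "j = p")
      case True
      have "N * p < (c + 1) * p" using h(4) True by (simp only: mult.commute)
      then have "N < c + 1" using lt_cancel[OF p] by blast
      moreover have "c * p < N * p" using h(3) True by (simp only: mult.commute)
      then have "c < N" using lt_cancel[OF p] by blast
      ultimately show False by simp
    next
      case False
      then have "j \<le> p - 1" using h(2) by simp
      then have a: "j * N \<le> (p - 1) * N" using Npos by (simp add: mult_right_mono)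
      have b: "(N - 1) * p \<le> c * p" using cN p by (simp add: mult_right_mono)
      have "(N - 1) * p < (p - 1) * N" using a b h(3) by linarith
      then show False using p q by (simp add: algebra_simps)
    qed
  qed
  have k: "0 < c" "c < N" using c1 c2 by auto
  have k1: "0 < c + 1" "c + 1 < N" using c1 c2 by auto
  have "R c * N < j * N" using T1[OF k] h(3) by linarith
  then have j1: "R c < j" using lt_cancel[OF Npos] by blast
  have "j * N < (R (c + 1) + 1) * N" using T2[OF k1] h(4) by linarith
  then have j2: "j < R (c + 1) + 1" using lt_cancel[OF Npos] by blast
  have st: "R (c + 1) \<le> R c + 1" using Rstep[of c] by (simp split: if_splits)
  have jj: "j = R c + 1" using j1 j2 st by simp
  have "I (c + 1) = I c"
  proof (rule ccontr)
    assume "I (c + 1) \<noteq> I c"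
    then have "R (c + 1) = R c" using Rstep[of c] by simp
    then show False using j1 j2 by simp
  qed
  then have "e \<in> set (TB p q c)" using Hor jj k1 by (simp add: TB_def)
  then show ?thesis using in_TLst[OF k] by blast
next
  case (Dia c r)
  have h: "0 \<le> c + r + 1" "c + r + 1 \<le> p + N" "c * (p + N) < (c + r + 1) * N" "(c + r + 1) * N < (c + 1) * (p + N)"
    using c unfolding Dia crosses.simps by blast+
  have A: "c * p < (r + 1) * N" using h(3) by (simp add: algebra_simps)
  have B: "r * N < (c + 1) * p" using h(4) by (simp add: algebra_simps)
  have c0: "0 \<le> c"
  proof (rule ccontr)
    assume "\<not> 0 \<le> c"
    then have "c + 1 \<le> 0" by simp
    then have "(c + 1) * p \<le> 0" using p by (simp add: mult_nonpos_nonneg)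
    moreover have "0 \<le> r" using h(1) \<open>c + 1 \<le> 0\<close> by simp
    then have "0 \<le> r * N" using Npos by simp
    ultimately show False using B by linarith
  qed
  show ?thesis
  proof (cases "c = 0")
    case True
    have "0 * N < (r + 1) * N" using A True by simp
    then have "0 < r + 1" using lt_cancel[OF Npos] by blast
    moreover have "r * N < 1 * N" using B True q by simp
    then have "r < 1" using lt_cancel[OF Npos] by blast
    ultimately have "r = 0" by simp
    then show ?thesis using Dia True by (simp add: TLst_def)
  next
    case False
    have cN: "c < N"
    proof (rule ccontr)
      assume "\<not> c < N"
      then have "N * p \<le> c * p" using p by (simp add: mult_right_mono)
      then have "p * N < (r + 1) * N" using A by (simp add: mult.commute)
      then have "p < r + 1" using lt_cancel[OF Npos] by blast
      then show False using h(2) \<open>\<not> c < N\<close> by simp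
    qed
    have k: "0 < c" "c < N" using False c0 cN by auto
    have "R c * N < (r + 1) * N" using T1[OF k] A by linarith
    then have "R c < r + 1" using lt_cancel[OF Npos] by blast
    then have r1: "R c \<le> r" by simp
    show ?thesis
    proof (cases "c + 1 < N")
      case True
      have k1: "0 < c + 1" "c + 1 < N" using True k by auto
      have "r * N < (R (c + 1) + 1) * N" using T2[OF k1] B by linarith
      then have r2: "r < R (c + 1) + 1" using lt_cancel[OF Npos] by blast
      show ?thesis
      proof (cases "r = R c")
        case True
        then have "e \<in> set (TB p q c)" using Dia by (simp add: TB_def)
        then show ?thesis using in_TLst[OF k] by blast
      next
        case False
        then have rr: "r = R c + 1" "R (c + 1) = R c + 1" using r1 r2 Rstep[of c] by (auto split: if_splits)
        then have "I (c + 1) = I c" using Rstep[of c] by (auto split: if_splits)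
        then have "e \<in> set (TB p q c)" using Dia rr k1 by (simp add: TB_def)
        then show ?thesis using in_TLst[OF k] by blast
      qed
    next
      case False
      then have cl: "c = N - 1" using k by simp
      have "r * N < p * N" using B cl by (simp add: mult.commute)
      then have "r < p" using lt_cancel[OF Npos] by blast
      then have "r = R c" using r1 Rlast cl by simp
      then have "e \<in> set (TB p q c)" using Dia by (simp add: TB_def)
      then show ?thesis using in_TLst[OF k] by blast
    qed
  qed
qed


lemma TB_facts:
  assumes k: "0 < k" "k < N"
  shows "(\<forall>e\<in>set (TB p q k). of_int k / of_int N \<le> cp p N e \<and> cp p N e < of_int (k + 1) / of_int N)
       \<and> sorted_wrt (\<lambda>e e'. cp p N e < cp p N e') (TB p q k)"
proof -
  have t1: "R k * N < k * p" and t2: "k * p < (R k + 1) * N" using T1[OF k] T2[OF k] by auto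
  have NN: "real_of_int k / of_int N < of_int (k + 1) / of_int N"
    by (simp only: frac_less_int[OF Npos Npos]) (simp add: algebra_simps Npos)
  have v: "cp p N (Ver k (R k)) = of_int k / of_int N" by (simp only: cp.simps)
  have d1: "of_int k / of_int N < cp p N (Dia k (R k))"
    by (simp only: cp.simps frac_less_int[OF Npos Mpos]) (use t2 in \<open>simp add: algebra_simps\<close>)
  have d2: "cp p N (Dia k (R k)) < of_int (k + 1) / of_int N"
    by (simp only: cp.simps frac_less_int[OF Mpos Npos]) (use t1 p in \<open>simp add: algebra_simps\<close>)
  show ?thesis
  proof (cases "k + 1 < N \<and> I (k + 1) = I k")
    case True
    have r1: "R (k + 1) = R k + 1" using True Rstep[of k] by simp
    have t3: "(R k + 1) * N < (k + 1) * p" using T1[of "k+1"] True k r1 by simp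
    have h1: "cp p N (Dia k (R k)) < cp p N (Hor k (R k + 1))"
      by (simp only: cp.simps frac_less_int[OF Mpos p]) (use t2 in \<open>simp add: algebra_simps\<close>)
    have h2: "cp p N (Hor k (R k + 1)) < cp p N (Dia k (R k + 1))"
      by (simp only: cp.simps frac_less_int[OF p Mpos]) (use t3 in \<open>simp add: algebra_simps\<close>)
    have h3: "cp p N (Dia k (R k + 1)) < of_int (k + 1) / of_int N"
      by (simp only: cp.simps frac_less_int[OF Mpos Npos]) (use t3 in \<open>simp add: algebra_simps\<close>)
    have L: "TB p q k = [Ver k (R k), Dia k (R k), Hor k (R k + 1), Dia k (R k + 1)]"
      using True by (simp add: TB_def)
    show ?thesis unfolding L using v d1 d2 h1 h2 h3 NN by auto
  next
    case False
    have L: "TB p q k = [Ver k (R k), Dia k (R k)]"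
      using False by (simp add: TB_def)
    show ?thesis unfolding L using v d1 d2 NN by auto
  qed
qed

lemma TLst_sorted: "sorted_wrt (\<lambda>e e'. cp p N e < cp p N e') (TLst p q)"
proof -
  have rest: "sorted_wrt (\<lambda>e e'. cp p N e < cp p N e') (concat (map (TB p q) [1..N - 1]))"
  proof (rule sorted_concat_blocks)
    show "sorted_wrt (<) [1..N - 1]" by simp
  next
    fix k assume "k \<in> set [1..N - 1]"
    then show "sorted_wrt (\<lambda>e e'. cp p N e < cp p N e') (TB p q k)" using TB_facts[of k] by auto
  next
    fix k k' x y assume kk: "k \<in> set [1..N - 1]" "k' \<in> set [1..N - 1]" "k < k'"
      and x: "x \<in> set (TB p q k)" and y: "y \<in> set (TB p q k')"
    have "cp p N x < of_int (k + 1) / of_int N" using TB_facts[of k] kk x by auto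
    also have "\<dots> \<le> of_int k' / of_int N"
      using kk by (simp only: frac_le_int[OF Npos Npos]) (simp add: mult_right_mono Npos less_imp_le)
    also have "\<dots> \<le> cp p N y" using TB_facts[of k'] kk y by auto
    finally show "cp p N x < cp p N y" .
  qed
  have first: "\<forall>y\<in>set (concat (map (TB p q) [1..N - 1])). cp p N (Dia 0 0) < cp p N y"
  proof
    fix y assume "y \<in> set (concat (map (TB p q) [1..N - 1]))"
    then obtain k where kk: "k \<in> set [1..N - 1]" "y \<in> set (TB p q k)" by auto
    have "cp p N (Dia 0 0) < of_int 1 / of_int N"
      by (simp only: cp.simps frac_less_int[OF Mpos Npos]) (use p in simp)
    also have "\<dots> \<le> of_int k / of_int N"
      using kk by (simp only: frac_le_int[OF Npos Npos]) (simp add: mult_right_mono Npos less_imp_le)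
    also have "\<dots> \<le> cp p N y" using TB_facts[of k] kk by auto
    finally show "cp p N (Dia 0 0) < cp p N y" .
  qed
  show ?thesis unfolding TLst_def using rest first by simp
qed

theorem crossing_list_TLst: "crossing_list p N = TLst p q"
proof (rule crossing_list_char[OF p Npos])
  show "set (TLst p q) = {e. crosses p N e}" using TLst_crosses crosses_TLst by blast
  show "sorted_wrt (\<lambda>e e'. cp p N e < cp p N e') (TLst p q)" by (rule TLst_sorted)
qed

end

fun DLm :: "letter \<Rightarrow> word" where
  "DLm (GX, s) = [(GX, s)]"
| "DLm (GY, s) = [(GY, False), (GZ, s), (GY, True)]"
| "DLm (GZ, s) = [(GY, s)]"

fun DRm :: "letter \<Rightarrow> word" where
  "DRm (GX, s) = [(GY, s)]"
| "DRm (GY, s) = [(GY, True), (GX, s), (GY, False)]"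
| "DRm (GZ, s) = [(GZ, s)]"

lemma good_DLm: "good DLm"
  unfolding good_def
proof
  fix a :: letter
  obtain g s where a: "a = (g, s)" by (cases a)
  show "DLm (inv_letter a) = fg_inv (DLm a)"
    unfolding a by (cases g) (simp_all add: inv_letter_def fg_inv_def)
qed

lemma good_DRm: "good DRm"
  unfolding good_def
proof
  fix a :: letter
  obtain g s where a: "a = (g, s)" by (cases a)
  show "DRm (inv_letter a) = fg_inv (DRm a)"
    unfolding a by (cases g) (simp_all add: inv_letter_def fg_inv_def)
qed

lemma subst_concat: "subst f (concat ls) = concat (map (subst f) ls)"
  by (induction ls) auto

lemma shift_concat: "concat (map (\<lambda>k. a # B k) ks) @ [a] = a # concat (map (\<lambda>k. B k @ [a]) ks)"
  by (induction ks) auto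

lemma reduce_concat_cong:
  "(\<And>k. k \<in> set ks \<Longrightarrow> reduce (f k) = reduce (g k)) \<Longrightarrow> reduce (concat (map f ks)) = reduce (concat (map g ks))"
proof (induction ks)
  case Nil then show ?case by simp
next
  case (Cons k ks)
  have a: "reduce (f k) = reduce (g k)" using Cons.prems by simp
  have b: "reduce (concat (map f ks)) = reduce (concat (map g ks))"
    by (rule Cons.IH) (use Cons.prems in simp)
  show ?case using reduce_cong_append[OF a b] by simp
qed

context cpq
begin

lemma rsE1: "rs p N (Ver k (R k)) = rs p q (dE p q k)"
  by (simp add: rk_def dE_def algebra_simps)

lemma rs_hor_case:
  assumes k: "0 < k" "k + 1 < N" and c: "I (k + 1) = I k"
  shows "rs p N (Dia k (R k)) \<and> \<not> rs p N (Dia k (R k + 1)) \<and> rs p N (Hor k (R k + 1)) = rs p q (mE p q k)"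
proof -
  have k0: "0 < k" "k < N" using k by auto
  have k1: "0 < k + 1" "k + 1 < N" using k by auto
  have r1: "R (k + 1) = R k + 1" using c Rstep[of k] by simp
  have a: "R k * N < k * p" "k * p < (R k + 1) * N" using T1[OF k0] T2[OF k0] by auto
  have b1: "(R k + 1) * N < (k + 1) * p" using T1[OF k1] r1 by simp
  have b2: "(k + 1) * p < (R k + 2) * N" using T2[OF k1] r1 by (simp add: algebra_simps)
  note b = b1 b2
  have "rs p N (Dia k (R k))" using a b by (simp add: algebra_simps)
  moreover have "\<not> rs p N (Dia k (R k + 1))" using a b by (simp add: algebra_simps)
  moreover have "rs p N (Hor k (R k + 1)) = rs p q (mE p q k)"
    using c by (simp add: mE_def rk_def algebra_simps)
  ultimately show ?thesis by blast
qed

lemma rs_ver_case: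
  assumes c: "I (k + 1) \<noteq> I k"
  shows "rs p N (Dia k (R k)) = rs p q (mE p q k)"
proof -
  have "I (k + 1) = I k + 1" using c step[of k] by auto
  then show ?thesis by (simp add: mE_def rk_def algebra_simps)
qed

lemma rs_last: "rs p N (Dia (N - 1) (R (N - 1)))"
  unfolding Rlast using q by (simp add: algebra_simps)

lemma rs_first: "\<not> rs p N (Dia 0 0)"
  using q by simp


lemma N2: "2 \<le> N" using p q by simp

lemma Wpq_blocks: "Wd p q = concat (map (\<lambda>k. map (edge_letter p q) (DB p q k)) [1..N - 1])"
  unfolding Wd_def crossing_list_DLst DLst_def by (simp add: map_concat comp_def)

lemma WpN_blocks: "Wd p N = edge_letter p N (Dia 0 0) # concat (map (\<lambda>k. map (edge_letter p N) (TB p q k)) [1..N - 1])"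
  unfolding Wd_def crossing_list_TLst TLst_def by (simp add: map_concat comp_def)

lemma ks_split: "[1..N - 1] = [1..N - 2] @ [N - 1]"
  using N2 upto_rec2[of 1 "N - 1"] by simp

definition Bk :: "int \<Rightarrow> word" where
  "Bk k = [(GZ, rs p q (dE p q k)), (GY, True)] @ DLm (edge_letter p q (mE p q k))"

lemma src_block: "k + 1 < N \<Longrightarrow> subst DLm (map (edge_letter p q) (DB p q k)) = (GY, False) # Bk k"
  by (simp add: DB_def Bk_def edge_letter_eq dE_def)

lemma src_last: "subst DLm (map (edge_letter p q) (DB p q (N - 1))) = [(GY, False), (GZ, rs p q (dE p q (N - 1))), (GY, True)]"
  by (simp add: DB_def edge_letter_eq dE_def)

lemma tgt_last: "map (edge_letter p N) (TB p q (N - 1)) = [(GZ, rs p q (dE p q (N - 1))), (GY, True)]"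
  using rs_last rsE1[of "N - 1"] by (simp add: TB_def edge_letter_eq)

lemma block_red: assumes k: "0 < k" "k + 1 < N"
  shows "reduce (Bk k @ [(GY, False)]) = reduce (map (edge_letter p N) (TB p q k))"
proof (cases "I (k + 1) = I k")
  case True
  have hc: "rs p N (Dia k (R k))" "\<not> rs p N (Dia k (R k + 1))" "rs p N (Hor k (R k + 1)) = rs p q (mE p q k)"
    using rs_hor_case[OF k True] by auto
  have g: "edge_gen (mE p q k) = GX" using True by (simp add: mE_def)
  have "Bk k @ [(GY, False)] = map (edge_letter p N) (TB p q k)"
    using True k hc g rsE1[of k] by (simp add: Bk_def TB_def edge_letter_eq)
  then show ?thesis by simp
next
  case False
  have hc: "rs p N (Dia k (R k)) = rs p q (mE p q k)" using rs_ver_case[OF False] .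
  have g: "edge_gen (mE p q k) = GZ" using False step[of k] by (auto simp: mE_def)
  have L1: "map (edge_letter p N) (TB p q k) = [(GZ, rs p q (dE p q k)), (GY, rs p q (mE p q k))]"
    using False hc rsE1[of k] by (simp add: TB_def edge_letter_eq)
  have L2: "Bk k @ [(GY, False)] = [(GZ, rs p q (dE p q k)), (GY, True), (GY, rs p q (mE p q k)), (GY, False)]"
    using g by (simp add: Bk_def edge_letter_eq)
  show ?thesis unfolding L1 L2
    by (cases "rs p q (mE p q k)") (simp_all add: reduce_Cons cr_def inv_letter_def)
qed

theorem L_main: "reduce (Wd p N) = reduce (subst DLm (Wd p q))"
proof -
  let ?ks = "[1..N - 2]"
  have inks: "\<And>k. k \<in> set ?ks \<Longrightarrow> 0 < k \<and> k + 1 < N" by auto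
  have S: "subst DLm (Wd p q) = (GY, False) # concat (map (\<lambda>k. Bk k @ [(GY, False)]) ?ks)
           @ [(GZ, rs p q (dE p q (N - 1))), (GY, True)]"
  proof -
    have "subst DLm (Wd p q) = concat (map (\<lambda>k. subst DLm (map (edge_letter p q) (DB p q k))) ?ks)
          @ subst DLm (map (edge_letter p q) (DB p q (N - 1)))"
      unfolding Wpq_blocks ks_split by (simp add: subst_concat comp_def)
    also have "concat (map (\<lambda>k. subst DLm (map (edge_letter p q) (DB p q k))) ?ks)
             = concat (map (\<lambda>k. (GY, False) # Bk k) ?ks)"
      using inks src_block by (intro arg_cong[where f = concat] map_cong) auto
    finally show ?thesis unfolding src_last using shift_concat[of "(GY, False)" Bk ?ks]
      by (metis append.assoc append_Cons append_Nil)
  qed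
  have T: "Wd p N = (GY, False) # concat (map (\<lambda>k. map (edge_letter p N) (TB p q k)) ?ks)
           @ [(GZ, rs p q (dE p q (N - 1))), (GY, True)]"
    unfolding WpN_blocks ks_split using rs_first tgt_last by (simp add: edge_letter_eq)
  have C: "reduce (concat (map (\<lambda>k. Bk k @ [(GY, False)]) ?ks)) = reduce (concat (map (\<lambda>k. map (edge_letter p N) (TB p q k)) ?ks))"
    by (rule reduce_concat_cong) (use inks block_red in blast)
  have "reduce ((GY, False) # concat (map (\<lambda>k. Bk k @ [(GY, False)]) ?ks) @ [(GZ, rs p q (dE p q (N - 1))), (GY, True)])
      = reduce ((GY, False) # concat (map (\<lambda>k. map (edge_letter p N) (TB p q k)) ?ks) @ [(GZ, rs p q (dE p q (N - 1))), (GY, True)])"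
    using reduce_cong_append[OF reduce_cong_append[OF refl C] refl, of "[(GY, False)]"] by simp
  then show ?thesis unfolding S T by simp
qed


end

lemma DR_conj: "subst DRm w = rev (map sw (subst DLm (rev (map sw w))))"
proof (induction w)
  case Nil then show ?case by simp
next
  case (Cons a w)
  obtain g s where a: "a = (g, s)" by (cases a)
  have l: "DRm a = rev (map sw (DLm (sw a)))"
    unfolding a by (cases g) (simp_all add: sw_def)
  show ?case using Cons l by (simp add: subst_def)
qed

lemma reduce_rev_sw: "reduce (rev (map sw w)) = rev (map sw (reduce w))"
  by (simp add: reduce_rev reduce_map_sw)

context cpq
begin

theorem R_main: "reduce (Wd (p + q) q) = reduce (subst DRm (Wd p q))"
proof -
  interpret A: cpq q p using p q cop by unfold_locales (auto simp: coprime_commute)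
  interpret B: cpq q "q + p" using p q cop by unfold_locales (auto simp: coprime_iff_gcd_eq_1 gcd.commute)
  have "reduce (Wd (p + q) q) = reduce (Wd (q + p) q)" by (simp add: add.commute)
  also have "\<dots> = reduce (rev (map sw (Wd q (q + p))))" using B.W_sym by simp
  also have "\<dots> = rev (map sw (reduce (Wd q (q + p))))" by (rule reduce_rev_sw)
  also have "\<dots> = rev (map sw (reduce (subst DLm (Wd q p))))" using A.L_main by simp
  also have "\<dots> = reduce (rev (map sw (subst DLm (Wd q p))))" by (rule reduce_rev_sw[symmetric])
  also have "\<dots> = reduce (rev (map sw (subst DLm (rev (map sw (Wd p q))))))" using W_sym by simp
  also have "\<dots> = reduce (subst DRm (Wd p q))" by (simp add: DR_conj)
  finally show ?thesis .
qed

end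

fun Afr :: "bool \<Rightarrow> frac \<Rightarrow> frac" where
  "Afr False (a, b) = (a, a + b)"
| "Afr True (a, b) = (a + b, b)"

definition Fpath :: "bool list \<Rightarrow> frac \<Rightarrow> frac" where
  "Fpath path v = foldr Afr path v"

definition Dd :: "bool \<Rightarrow> letter \<Rightarrow> word" where
  "Dd d = (if d then DRm else DLm)"

definition Spath :: "bool list \<Rightarrow> word \<Rightarrow> word" where
  "Spath path w = foldr (\<lambda>d w. subst (Dd d) w) path w"

lemma good_Dd: "good (Dd d)"
  by (simp add: Dd_def good_DLm good_DRm)

lemma Afr_mediant: "Afr d (mediant u v) = mediant (Afr d u) (Afr d v)"
  by (cases u; cases v; cases d) (simp_all add: mediant_def)

lemma Fpath_mediant: "Fpath path (mediant u v) = mediant (Fpath path u) (Fpath path v)"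
  unfolding Fpath_def by (induction path) (simp_all add: Afr_mediant)

lemma Fpath_snoc: "Fpath (xs @ [d]) v = Fpath xs (Afr d v)"
  by (simp add: Fpath_def)

lemma farey_vertex_F: "farey_vertex path = (Fpath path (0, 1), Fpath path (1, 1), Fpath path (1, 0))"
proof (induction path rule: rev_induct)
  case Nil then show ?case by (simp add: farey_vertex_def farey_root_def Fpath_def)
next
  case (snoc d xs)
  have fv: "farey_vertex (xs @ [d]) = farey_child (farey_vertex xs) d"
    by (simp add: farey_vertex_def)
  show ?case
  proof (cases d)
    case True
    have m: "mediant (1, 1) (1, 0) = ((2::nat), (1::nat))" by (simp add: mediant_def)
    have "mediant (Fpath xs (1, 1)) (Fpath xs (1, 0)) = Fpath xs (2, 1)"
      by (simp only: Fpath_mediant[symmetric] m)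
    then show ?thesis using fv snoc True by (simp add: farey_child_def Fpath_snoc numeral_2_eq_2)
  next
    case False
    have m: "mediant (0, 1) (1, 1) = ((1::nat), (2::nat))" by (simp add: mediant_def)
    have "mediant (Fpath xs (0, 1)) (Fpath xs (1, 1)) = Fpath xs (1, 2)"
      by (simp only: Fpath_mediant[symmetric] m)
    then show ?thesis using fv snoc False by (simp add: farey_child_def Fpath_snoc numeral_2_eq_2)
  qed
qed

lemma Spath_append: "Spath path (u @ v) = Spath path u @ Spath path v"
  unfolding Spath_def by (induction path) auto

lemma Spath_inv: "Spath path (fg_inv w) = fg_inv (Spath path w)"
  unfolding Spath_def by (induction path) (auto simp: subst_fg_inv good_Dd)

lemma Spath_snoc: "Spath (xs @ [d]) w = Spath xs (subst (Dd d) w)"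
  by (simp add: Spath_def)

lemma fg_mult_red: "fg_mult (reduce u) (reduce v) = reduce (u @ v)"
  by (simp add: fg_mult_def reduce_append_left reduce_append_right)

lemma word_vertex_S: "word_vertex path = (reduce (Spath path gx), reduce (Spath path gy), reduce (Spath path gz))"
proof (induction path rule: rev_induct)
  case Nil then show ?case by (simp add: word_vertex_def word_root_def Spath_def reduce_Cons cr_def)
next
  case (snoc d xs)
  have wv: "word_vertex (xs @ [d]) = word_child (word_vertex xs) d"
    by (simp add: word_vertex_def)
  let ?x = "Spath xs gx" and ?y = "Spath xs gy" and ?z = "Spath xs gz"
  have iy: "fg_inv (reduce ?y) = reduce (fg_inv ?y)" by (simp add: reduce_fg_inv)
  show ?case
  proof (cases d)
    case True
    have e1: "subst (Dd d) gy = fg_inv gy @ gx @ gy" using True by (simp add: Dd_def fg_inv_def inv_letter_def)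
    have "fg_mult (fg_inv (reduce ?y)) (fg_mult (reduce ?x) (reduce ?y)) = reduce (fg_inv ?y @ ?x @ ?y)"
      unfolding iy by (simp add: fg_mult_red)
    moreover have "Spath (xs @ [d]) gy = fg_inv ?y @ ?x @ ?y"
      unfolding Spath_snoc e1 Spath_append Spath_inv by simp
    moreover have "Spath (xs @ [d]) gx = ?y" "Spath (xs @ [d]) gz = ?z"
      unfolding Spath_snoc using True by (simp_all add: Dd_def)
    ultimately show ?thesis using wv snoc True by (simp add: word_child_def)
  next
    case False
    have e1: "subst (Dd d) gy = gy @ gz @ fg_inv gy" using False by (simp add: Dd_def fg_inv_def inv_letter_def)
    have "fg_mult (reduce ?y) (fg_mult (reduce ?z) (fg_inv (reduce ?y))) = reduce (?y @ ?z @ fg_inv ?y)"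
      unfolding iy by (simp add: fg_mult_red)
    moreover have "Spath (xs @ [d]) gy = ?y @ ?z @ fg_inv ?y"
      unfolding Spath_snoc e1 Spath_append Spath_inv by simp
    moreover have "Spath (xs @ [d]) gx = ?x" "Spath (xs @ [d]) gz = ?y"
      unfolding Spath_snoc using False by (simp_all add: Dd_def)
    ultimately show ?thesis using wv snoc False by (simp add: word_child_def)
  qed
qed


lemma omega_pos: assumes "0 < a" "0 < b" "coprime a b"
  shows "omega_frac (a, b) = Wd (int a) (int b)"
proof -
  have "quotient_of (Fract (int a) (int b)) = (int a, int b)"
    using assms by (simp add: quotient_of_Fract)
  then show ?thesis using assms by (simp add: omega_frac_def omega_rat_def Wd_def)
qed

lemma W11: "Wd 1 1 = gy"
proof -
  interpret cpq 1 1 by unfold_locales auto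
  have "ik 1 1 1 = 0" by (simp add: ik_def)
  then have "DLst 1 1 = [Dia 0 0]" by (simp add: DLst_def DB_def dE_def)
  then show ?thesis unfolding Wd_def crossing_list_DLst by (simp add: edge_letter_eq)
qed

lemma omega_11: "omega_frac (1, 1) = gy"
  using omega_pos[of 1 1] W11 by simp

lemma omega_01: "omega_frac (0, 1) = gx" by (simp add: omega_frac_def)
lemma omega_10: "omega_frac (1, 0) = gz" by (simp add: omega_frac_def)
lemma omega_11': "omega_frac (Suc 0, Suc 0) = gy" using omega_11 by simp
lemma omega_01': "omega_frac (0, Suc 0) = gx" by (simp add: omega_frac_def)
lemma omega_10': "omega_frac (Suc 0, 0) = gz" by (simp add: omega_frac_def)

lemma Afr_coprime: "coprime (fst v) (snd v) \<Longrightarrow> coprime (fst (Afr d v)) (snd (Afr d v))"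
  by (cases v; cases d) (simp_all add: coprime_iff_gcd_eq_1)

lemma key: assumes c: "coprime a b"
  shows "reduce (omega_frac (Afr d (a, b))) = reduce (subst (Dd d) (omega_frac (a, b)))"
proof (cases "b = 0")
  case True
  then have a: "a = 1" using c by simp
  show ?thesis using True a
    by (cases d) (simp_all add: Dd_def omega_11 omega_10 omega_11' omega_10')
next
  case False
  show ?thesis
  proof (cases "a = 0")
    case True
    then have b: "b = 1" using c by simp
    show ?thesis using True b
      by (cases d) (simp_all add: Dd_def omega_11 omega_01 omega_11' omega_01')
  next
    case a0: False
    interpret cpq "int a" "int b" using a0 False c by unfold_locales auto
    show ?thesis
    proof (cases d)
      case True
      have c2: "coprime (a + b) b" using c by (simp add: coprime_iff_gcd_eq_1)
      have "omega_frac (Afr d (a, b)) = Wd (int a + int b) (int b)"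
        using True omega_pos[of "a + b" b] c2 False by simp
      then show ?thesis using True R_main omega_pos[of a b] a0 False c by (simp add: Dd_def)
    next
      case fa: False
      have c2: "coprime a (a + b)" using c by (simp add: coprime_iff_gcd_eq_1)
      have "omega_frac (Afr d (a, b)) = Wd (int a) (int a + int b)"
        using fa omega_pos[of a "a + b"] c2 a0 by simp
      then show ?thesis using fa L_main omega_pos[of a b] a0 False c by (simp add: Dd_def)
    qed
  qed
qed

lemma main_ind: "coprime (fst v) (snd v) \<Longrightarrow> reduce (omega_frac (Fpath path v)) = reduce (Spath path (omega_frac v))"
proof (induction path)
  case Nil then show ?case by (simp add: Fpath_def Spath_def)
next
  case (Cons d ds)
  have cu: "coprime (fst (Fpath ds v)) (snd (Fpath ds v))"
  proof -
    have "\<And>ds. coprime (fst (Fpath ds v)) (snd (Fpath ds v))"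
    proof -
      fix ds show "coprime (fst (Fpath ds v)) (snd (Fpath ds v))"
        unfolding Fpath_def by (induction ds) (use Cons.prems Afr_coprime in auto)
    qed
    then show ?thesis .
  qed
  obtain a b where ab: "Fpath ds v = (a, b)" by (cases "Fpath ds v")
  have "reduce (omega_frac (Fpath (d # ds) v)) = reduce (omega_frac (Afr d (a, b)))"
    using ab by (simp add: Fpath_def)
  also have "\<dots> = reduce (subst (Dd d) (omega_frac (a, b)))" using key cu ab by simp
  also have "\<dots> = reduce (subst (Dd d) (reduce (omega_frac (Fpath ds v))))"
    using ab reduce_subst_reduce[OF good_Dd] by simp
  also have "\<dots> = reduce (subst (Dd d) (reduce (Spath ds (omega_frac v))))"
    using Cons by simp
  also have "\<dots> = reduce (Spath (d # ds) (omega_frac v))"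
    using reduce_subst_reduce[OF good_Dd] by (simp add: Spath_def)
  finally show ?case .
qed

lemma Phi_vertex: "Phi (farey_vertex path) = word_vertex path"
proof -
  have "Phi (farey_vertex path) = (reduce (omega_frac (Fpath path (0, 1))),
      reduce (omega_frac (Fpath path (1, 1))), reduce (omega_frac (Fpath path (1, 0))))"
    by (simp add: farey_vertex_F Phi_def)
  also have "\<dots> = (reduce (Spath path gx), reduce (Spath path gy), reduce (Spath path gz))"
    using main_ind[of "(0,1)" path] main_ind[of "(1,1)" path] main_ind[of "(1,0)" path]
    by (simp add: omega_11 omega_01 omega_10 omega_11' omega_01' omega_10')
  also have "\<dots> = word_vertex path" by (simp add: word_vertex_S)
  finally show ?thesis .
qed

theorem theorem3p6:
  shows "Phi farey_root = word_root
     \<and> (\<forall>path d. Phi (farey_child (farey_vertex path) d) = word_child (Phi (farey_vertex path)) d)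
     \<and> (\<forall>path. Phi (farey_vertex path) = word_vertex path)"
proof (intro conjI allI)
  show "Phi farey_root = word_root"
    using Phi_vertex[of "[]"] by (simp add: farey_vertex_def word_vertex_def)
next
  fix path d
  have "farey_child (farey_vertex path) d = farey_vertex (path @ [d])"
    by (simp add: farey_vertex_def)
  moreover have "word_child (word_vertex path) d = word_vertex (path @ [d])"
    by (simp add: word_vertex_def)
  ultimately show "Phi (farey_child (farey_vertex path) d) = word_child (Phi (farey_vertex path)) d"
    by (simp add: Phi_vertex)
next
  fix path show "Phi (farey_vertex path) = word_vertex path" by (rule Phi_vertex)
qed

end
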